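(* Suppose $\Delta$ is full dimensional and convex, and let $\epsilon>0$. For any $x\in\mathcal X$, $$\max_{\phi\in\mathcal P(\Delta)}\Big\{\mathbb E_{\tilde\delta\sim\phi}[g(x,\tilde\delta)]-\kappa(\epsilon)D(\phi,\phi_u)\Big\}\ge G(x)-\epsilon,$$ and $$G(x)\ge\mathbb E_{\tilde\delta\sim\phi_{\kappa(\epsilon),x}}[g(x,\tilde\delta)]\ge G(x)-\epsilon.$$
   Context: $\mathcal X\subset\mathbb R^n$ compact convex; $\Delta\subset\mathbb R^d$ compact; $g:\mathcal X\times\Delta\to\mathbb R$ with $\delta\mapsto g(x,\delta)$ $L_{g,\Delta}$-Lipschitz (Euclidean norm) for each $x$; $G(x):=\max_{\delta\in\Delta}g(x,\delta)$. $\mathcal P(\Delta)$ is the set of probability distributions on $\Delta$; $\phi_u$ is the uniform density on $\Delta$, $\phi_u\equiv p_u:=(\int_\Delta d\delta)^{-1}$; $D(\phi,\varphi):=\int_\Delta\log(\phi(\delta)/\varphi(\delta))\phi(d\delta)$ is the Kullback–Leibler divergence. For $\kappa\in(0,1]$, $\phi_{\kappa,x}(\delta):=\exp(g(x,\delta)/\kappa)/\int_\Delta\exp(g(x,\delta')/\kappa)d\delta'$. $R_\Delta$ is the radius of the largest Euclidean ball $B_{R_\Delta}(\delta_0)\subseteq\Delta$; $r:=\mathrm{vol}(B_{R_\Delta}(\delta_0))/\mathrm{vol}(\Delta)$; $D_\Delta:=\max_{\delta,\delta'\in\Delta}\|\delta-\delta'\|$; $C:=L_{g,\Delta}(R_\Delta+D_\Delta)-\log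 r$; $\kappa(\epsilon):=\min\{\frac{\epsilon}{2C},(\frac{\epsilon}{2d})^2,1\}$. *)

theory Defs
  imports "HOL-Analysis.Analysis"
begin

definition inradius :: "'b::euclidean_space set \<Rightarrow> real" where
  "inradius D = Sup {\<rho>. 0 \<le> \<rho> \<and> (\<exists>c. cball c \<rho> \<subseteq> D)}"

definition ball_ratio :: "'b::euclidean_space set \<Rightarrow> real" where
  "ball_ratio D = measure lborel (cball (0::'b) (inradius D)) / measure lborel D"

definition Cconst :: "real \<Rightarrow> 'b::euclidean_space set \<Rightarrow> real" where
  "Cconst L D = L * (inradius D + diameter D) - ln (ball_ratio D)"

text \<open>kappa(eps) = min {eps/(2C), (eps/(2d))^2, 1}, with eps/(2C) read as +infinity if C = 0.\<close>
definition kappa :: "real \<Rightarrow> 'b::euclidean_space set \<Rightarrow> real \<Rightarrow> real" where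
  "kappa L D \<epsilon> =
     (if Cconst L D = 0 then min ((\<epsilon> / (2 * real DIM('b)))\<^sup>2) 1
      else min (\<epsilon> / (2 * Cconst L D)) (min ((\<epsilon> / (2 * real DIM('b)))\<^sup>2) 1))"

definition Gmax :: "('a \<Rightarrow> 'b \<Rightarrow> real) \<Rightarrow> 'b set \<Rightarrow> 'a \<Rightarrow> real" where
  "Gmax g D x = (SUP \<delta>\<in>D. g x \<delta>)"

definition unif_dens :: "'b::euclidean_space set \<Rightarrow> real" where
  "unif_dens D = 1 / measure lborel D"

definition is_density :: "'b::euclidean_space set \<Rightarrow> ('b \<Rightarrow> real) \<Rightarrow> bool" where
  "is_density D \<phi> \<longleftrightarrow> (\<forall>\<delta>\<in>D. 0 \<le> \<phi> \<delta>) \<and> set_integrable lborel D \<phi>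
      \<and> (LINT \<delta>:D|lborel. \<phi> \<delta>) = 1"

definition KL_unif :: "'b::euclidean_space set \<Rightarrow> ('b \<Rightarrow> real) \<Rightarrow> real" where
  "KL_unif D \<phi> = (LINT \<delta>:D|lborel. \<phi> \<delta> * ln (\<phi> \<delta> / unif_dens D))"

definition expect :: "'b::euclidean_space set \<Rightarrow> ('b \<Rightarrow> real) \<Rightarrow> ('b \<Rightarrow> real) \<Rightarrow> real" where
  "expect D \<phi> h = (LINT \<delta>:D|lborel. h \<delta> * \<phi> \<delta>)"

definition gibbs :: "('a \<Rightarrow> 'b::euclidean_space \<Rightarrow> real) \<Rightarrow> 'b set \<Rightarrow> real \<Rightarrow> 'a \<Rightarrow> 'b \<Rightarrow> real" where
  "gibbs g D \<kappa> x \<delta> = exp (g x \<delta> / \<kappa>) / (LINT \<delta>':D|lborel. exp (g x \<delta>' / \<kappa>))"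

end

theory Submission
  imports Defs
begin

lemma neg_klnk_le_sqrt:
  fixes k :: real assumes "0 < k" "k \<le> 1"
  shows "- (k * ln k) \<le> sqrt k"
proof -
  define u where "u = sqrt (sqrt k)"
  have u0: "u > 0" using assms by (simp add: u_def)
  have sk: "sqrt k = u^2" unfolding u_def using assms by simp
  have "u^4 = (u^2)^2" by (simp add: power_mult[symmetric])
  also have "\<dots> = k" using sk[symmetric] assms by simp
  finally have k4: "k = u ^ 4" by simp
  have lk: "ln k = 4 * ln u" unfolding k4 using u0 by (simp add: ln_realpow)
  have "ln (1/u) \<le> 1/u - 1" using u0 by (intro ln_le_minus_one) simp
  then have "- ln u \<le> 1/u - 1" using u0 by (simp add: ln_div)
  then have "4 * u^4 * (- ln u) \<le> 4 * u^4 * (1/u - 1)" using u0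
    by (intro mult_left_mono) auto
  then have "- (k * ln k) \<le> 4 * u^4 * (1/u - 1)" 
  proof -
    have "- (k * ln k) = 4 * u^4 * (- ln u)" by (subst lk, subst (1) k4) (simp only: mult_minus_right mult.commute mult.left_commute mult.assoc)
    then show ?thesis using \<open>4 * u^4 * (- ln u) \<le> 4 * u^4 * (1/u - 1)\<close> by linarith
  qed
  also have "\<dots> = 4*u^3 - 4*u^4" using u0 by (simp add: power4_eq_xxxx power3_eq_cube field_simps)
  also have "\<dots> \<le> u^2"
  proof -
    have "0 \<le> u^2 * (2*u - 1)^2" by simp
    also have "u^2 * (2*u - 1)^2 = u^2 - (4*u^3 - 4*u^4)" by (simp add: power2_eq_square power3_eq_cube power4_eq_xxxx algebra_simps)
    finally show ?thesis by simp
  qed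
  finally show ?thesis using sk by simp
qed

lemma ent_pt:
  fixes a b :: real assumes "0 < a" "0 < b"
  shows "a - b \<le> a * ln (a / b)"
proof -
  have "ln (b/a) \<le> b/a - 1" using assms by (intro ln_le_minus_one) simp
  then have "ln (a/b) \<ge> 1 - b/a" using assms by (simp add: ln_div)
  then have "a * ln (a/b) \<ge> a * (1 - b/a)" using assms by (intro mult_left_mono) auto
  moreover have "a * (1 - b/a) = a - b" using assms by (simp add: field_simps)
  ultimately show ?thesis by linarith
qed

lemma sup_ln_bound:
  fixes S :: "real set"
  assumes "\<forall>\<rho>\<in>S. 0 < \<rho> \<longrightarrow> ln \<rho> \<le> T" "\<rho>0 \<in> S" "0 < \<rho>0" "\<forall>\<rho>\<in>S. 0 \<le> \<rho>"
  shows "ln (Sup S) \<le> T" "\<rho>0 \<le> Sup S" "bdd_above S"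
proof -
  have b: "\<forall>\<rho>\<in>S. \<rho> \<le> exp T"
  proof
    fix \<rho> assume "\<rho> \<in> S"
    show "\<rho> \<le> exp T"
    proof (cases "\<rho> > 0")
      case True
      then have "ln \<rho> \<le> T" using assms \<open>\<rho>\<in>S\<close> by auto
      then show ?thesis using True by (metis exp_le_cancel_iff exp_ln)
    next
      case False then show ?thesis by (smt (verit) exp_gt_zero)
    qed
  qed
  show bd: "bdd_above S" using b by (auto simp: bdd_above_def)
  show "\<rho>0 \<le> Sup S" using bd assms(2) by (rule cSup_upper[rotated])
  have "Sup S \<le> exp T" using b assms(2) by (intro cSup_least) auto
  moreover have "0 < Sup S" using \<open>\<rho>0 \<le> Sup S\<close> assms(3) by simp
  ultimately show "ln (Sup S) \<le> T" by (metis ln_exp ln_le_cancel_iff exp_gt_zero)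
qed


theorem mainTheorem11:
  fixes X :: "'a::euclidean_space set" and \<Delta> :: "'b::euclidean_space set"
    and g :: "'a \<Rightarrow> 'b \<Rightarrow> real" and L \<epsilon> :: real and x :: 'a
  assumes "compact X" and "convex X"
    and "compact \<Delta>" and "convex \<Delta>" and "interior \<Delta> \<noteq> {}"
    and "\<forall>x'\<in>X. L-lipschitz_on \<Delta> (g x')"
    and "\<epsilon> > 0" and "x \<in> X"
  shows "(\<exists>\<phi>. is_density \<Delta> \<phi>
            \<and> set_integrable lborel \<Delta> (\<lambda>\<delta>. g x \<delta> * \<phi> \<delta>)
            \<and> set_integrable lborel \<Delta> (\<lambda>\<delta>. \<phi> \<delta> * ln (\<phi> \<delta> / unif_dens \<Delta>))
            \<and> expect \<Delta> \<phi> (g x) - kappa L \<Delta> \<epsilon> * KL_unif \<Delta> \<phi> \<ge> Gmax g \<Delta> x - \<epsilon>)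
         \<and> Gmax g \<Delta> x \<ge> expect \<Delta> (gibbs g \<Delta> (kappa L \<Delta> \<epsilon>) x) (g x)
         \<and> expect \<Delta> (gibbs g \<Delta> (kappa L \<Delta> \<epsilon>) x) (g x) \<ge> Gmax g \<Delta> x - \<epsilon>"
proof -
  define h where "h = g x"
  have lip: "L-lipschitz_on \<Delta> h" using assms(6,8) by (simp add: h_def)
  have L0: "0 \<le> L" using lip by (rule lipschitz_on_nonneg)
  have hcont: "continuous_on \<Delta> h" using lip by (rule lipschitz_on_continuous_on)
  have Dne: "\<Delta> \<noteq> {}" using assms(5) interior_subset by blast
  obtain ds where ds: "ds \<in> \<Delta>" "\<forall>y\<in>\<Delta>. h y \<le> h ds"
    using continuous_attains_sup[OF assms(3) Dne hcont] by blast
  define G where "G = h ds"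
  have Geq: "Gmax g \<Delta> x = G"
    unfolding Gmax_def G_def h_def[symmetric] using ds by (intro cSup_eq_maximum) auto
  have hle: "\<And>y. y \<in> \<Delta> \<Longrightarrow> h y \<le> G" using ds G_def by auto
  define d where "d = real DIM('b)"
  have d1: "1 \<le> d" unfolding d_def by simp
  define u where "u = unit_ball_vol d"
  have u0: "0 < u" unfolding u_def using d1 by simp
  define V where "V = measure lborel \<Delta>"
  have Dfm: "\<Delta> \<in> fmeasurable lborel" using assms(3) by (rule fmeasurable_compact)
  have Dsets: "\<Delta> \<in> sets lborel" using Dfm by (simp add: fmeasurable_def)
  have volc: "\<And>c r. 0 \<le> r \<Longrightarrow> measure lborel (cball (c::'b) r) = u * r ^ DIM('b)"
    unfolding u_def d_def by (rule content_cball)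
  have ballV: "u * r ^ DIM('b) \<le> V" if "0 \<le> r" "cball c r \<subseteq> \<Delta>" for c r
  proof -
    have "measure lborel (cball c r) \<le> V" unfolding V_def
      by (rule measure_mono_fmeasurable[OF that(2) _ Dfm]) simp
    then show ?thesis using volc[OF that(1)] by simp
  qed
  define Rs where "Rs = {\<rho>. 0 \<le> \<rho> \<and> (\<exists>c. cball c \<rho> \<subseteq> \<Delta>)}"
  define R where "R = inradius \<Delta>"
  have Rdef: "R = Sup Rs" unfolding R_def inradius_def Rs_def ..
  obtain c0 e where e: "e > 0" "ball c0 e \<subseteq> \<Delta>" using assms(5) by (meson all_not_in_conv mem_interior)
  define \<rho>0 where "\<rho>0 = e/2"
  have "cball c0 \<rho>0 \<subseteq> \<Delta>" 
  proof -
    have "cball c0 \<rho>0 \<subseteq> ball c0 e" using e by (simp add: cball_subset_ball_iff \<rho>0_def)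
    then show ?thesis using e by blast
  qed
  then have r0: "\<rho>0 \<in> Rs" "0 < \<rho>0" using e by (auto simp: Rs_def \<rho>0_def)
  have Rs0: "\<forall>\<rho>\<in>Rs. 0 \<le> \<rho>" by (simp add: Rs_def)
  have V0: "0 < V" using ballV[of \<rho>0 c0] \<open>cball c0 \<rho>0 \<subseteq> \<Delta>\<close> r0 u0
    by (smt (verit) mult_pos_pos zero_less_power)
  have bndV: "\<forall>\<rho>\<in>Rs. 0 < \<rho> \<longrightarrow> ln \<rho> \<le> (ln V - ln u) / d"
  proof (intro ballI impI)
    fix \<rho> assume "\<rho> \<in> Rs" "0 < \<rho>"
    then obtain c where "cball c \<rho> \<subseteq> \<Delta>" by (auto simp: Rs_def)
    then have "u * \<rho> ^ DIM('b) \<le> V" using ballV \<open>0<\<rho>\<close> by simp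
    then have "ln (u * \<rho> ^ DIM('b)) \<le> ln V" using u0 V0 \<open>0<\<rho>\<close> by (subst ln_le_cancel_iff) auto
    moreover have "ln (u * \<rho> ^ DIM('b)) = ln u + d * ln \<rho>" using u0 \<open>0<\<rho>\<close> by (simp add: ln_mult ln_realpow d_def)
    ultimately show "ln \<rho> \<le> (ln V - ln u) / d" using d1 by (simp add: field_simps)
  qed
  have lnR1: "ln R \<le> (ln V - ln u) / d"
    unfolding Rdef by (rule sup_ln_bound(1)[OF bndV r0 Rs0])
  have R0: "\<rho>0 \<le> R"
    unfolding Rdef by (rule sup_ln_bound(2)[OF bndV r0 Rs0])
  have Rpos: "0 < R" using R0 r0 by simp
  define r where "r = ball_ratio \<Delta>"
  have r_eq: "r = u * R ^ DIM('b) / V"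
    unfolding r_def ball_ratio_def R_def[symmetric] V_def[symmetric] using volc Rpos by simp
  have lnr: "ln r = ln u + d * ln R - ln V"
    unfolding r_eq using u0 Rpos V0 by (simp add: ln_mult ln_div ln_realpow d_def)
  have lnr0: "ln r \<le> 0" using lnr lnR1 d1 by (simp add: field_simps)
  define C where "C = Cconst L \<Delta>"
  have C_eq: "C = L * (R + diameter \<Delta>) - ln r"
    unfolding C_def Cconst_def R_def r_def ..
  have diam0: "0 \<le> diameter \<Delta>" by (simp add: diameter_ge_0 compact_imp_bounded assms(3))
  have "0 \<le> L * (R + diameter \<Delta>)" using L0 Rpos diam0 by simp
  then have C0: "0 \<le> C" unfolding C_eq using lnr0 by linarith
  define k where "k = kappa L \<Delta> \<epsilon>"
  have kprops: "0 < k \<and> k \<le> 1 \<and> k * C \<le> \<epsilon>/2 \<and> k \<le> (\<epsilon>/(2*d))^2"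
  proof (cases "C = 0")
    case True
    then show ?thesis unfolding k_def kappa_def C_def[symmetric] d_def[symmetric]
      using assms(7) d1 by auto
  next
    case False
    then have Cp: "C > 0" using C0 by simp
    have k: "k = min (\<epsilon> / (2 * C)) (min ((\<epsilon> / (2 * d))\<^sup>2) 1)"
      unfolding k_def kappa_def C_def[symmetric] d_def[symmetric] using False by simp
    have "k * C \<le> \<epsilon> / (2 * C) * C" using Cp k by (intro mult_right_mono) auto
    also have "\<dots> = \<epsilon>/2" using Cp by simp
    finally show ?thesis using k Cp assms(7) d1 by auto
  qed
  have k0: "0 < k" and k1: "k \<le> 1" and kC: "k * C \<le> \<epsilon>/2" and kd: "k \<le> (\<epsilon>/(2*d))^2"
    using kprops by auto
  have sqk: "d * sqrt k \<le> \<epsilon>/2"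
  proof -
    have "sqrt k \<le> sqrt ((\<epsilon>/(2*d))^2)" using kd by (rule real_sqrt_le_mono)
    also have "\<dots> = \<epsilon>/(2*d)" using assms(7) d1 by simp
    finally show ?thesis using d1 by (simp add: field_simps)
  qed
  have klnk: "- (\<epsilon>/2) \<le> d * (k * ln k)"
  proof -
    have "- (k * ln k) \<le> sqrt k" using k0 k1 by (rule neg_klnk_le_sqrt)
    then have "d * (- (k * ln k)) \<le> d * sqrt k" using d1 by (intro mult_left_mono) auto
    then show ?thesis using sqk by simp
  qed
  have cint: "set_integrable lborel \<Delta> f" if "continuous_on \<Delta> f" for f :: "'b \<Rightarrow> real"
    unfolding set_integrable_def using borel_integrable_compact[OF assms(3) that] by simp
  define Z where "Z = (LINT \<delta>:\<Delta>|lborel. exp (h \<delta> / k))"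
  have intZ: "set_integrable lborel \<Delta> (\<lambda>\<delta>. exp (h \<delta> / k))"
    by (rule cint) (use k0 in \<open>auto intro!: continuous_intros hcont\<close>)
  define m where "m = exp (G / k - L * diameter \<Delta>)"
  have m0: "0 < m" unfolding m_def by simp
  have Zlow: "u * k ^ DIM('b) * \<rho> ^ DIM('b) * m \<le> Z" if \<rho>p: "0 < \<rho>" and cb: "cball c \<rho> \<subseteq> \<Delta>" for \<rho> c
  proof -
    define c' where "c' = ds + k *\<^sub>R (c - ds)"
    define S where "S = cball c' (k * \<rho>)"
    have Sprop: "y \<in> \<Delta> \<and> dist y ds \<le> k * diameter \<Delta>" if "y \<in> S" for y
    proof -
      define z where "z = c + (1/k) *\<^sub>R (y - c')"
      have "dist c z = (1/k) * norm (y - c')" unfolding z_def using k0 by (simp add: dist_norm)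
      also have "norm (y - c') \<le> k * \<rho>" using that unfolding S_def by (simp add: dist_norm norm_minus_commute)
      then have "(1/k) * norm (y - c') \<le> (1/k) * (k * \<rho>)" using k0 by (intro mult_left_mono) auto
      also have "(1/k) * (k * \<rho>) = \<rho>" using k0 by simp
      finally have "z \<in> cball c \<rho>" by simp
      then have zD: "z \<in> \<Delta>" using cb by blast
      have yeq: "y = (1 - k) *\<^sub>R ds + k *\<^sub>R z"
        unfolding z_def c'_def using k0 by (simp add: algebra_simps)
      have "y \<in> \<Delta>" unfolding yeq by (rule convexD[OF assms(4) ds(1) zD]) (use k0 k1 in auto)
      moreover have "dist y ds = k * dist z ds"
        unfolding yeq using k0 by (simp add: dist_norm algebra_simps flip: scaleR_diff_right)
      moreover have "dist z ds \<le> diameter \<Delta>"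
        using zD ds(1) assms(3) by (simp add: diameter_bounded_bound compact_imp_bounded)
      ultimately show ?thesis using k0 by (simp add: mult_left_mono)
    qed
    then have SD: "S \<subseteq> \<Delta>" by blast
    have bnd: "m \<le> exp (h y / k)" if "y \<in> S" for y
    proof -
      have "dist (h y) (h ds) \<le> L * dist y ds" using lip Sprop[OF that] ds(1) by (intro lipschitz_onD) auto
      also have "\<dots> \<le> L * (k * diameter \<Delta>)" using Sprop[OF that] L0 by (intro mult_left_mono) auto
      finally have "G - L * (k * diameter \<Delta>) \<le> h y" unfolding G_def dist_real_def by linarith
      then have "(G - L * (k * diameter \<Delta>)) / k \<le> h y / k" using k0 by (simp add: divide_right_mono)
      moreover have "(G - L * (k * diameter \<Delta>)) / k = G / k - L * diameter \<Delta>" using k0 by (simp add: field_simps)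
      ultimately show ?thesis unfolding m_def by simp
    qed
    have Sfm: "S \<in> fmeasurable lborel" unfolding S_def by (rule fmeasurable_compact) simp
    have fun_eq: "(\<lambda>\<delta>. indicator \<Delta> \<delta> *\<^sub>R (indicator S \<delta> * m)) = (\<lambda>\<delta>. indicator S \<delta> *\<^sub>R m)"
      using SD by (intro ext) (auto split: split_indicator)
    have intS: "set_integrable lborel \<Delta> (\<lambda>\<delta>. indicator S \<delta> * m)"
      unfolding set_integrable_def fun_eq
      using borel_integrable_compact[of S "\<lambda>_. m"] unfolding S_def by simp
    have "(LINT \<delta>:\<Delta>|lborel. indicator S \<delta> * m) = (LINT \<delta>:S|lborel. m)"
      unfolding set_lebesgue_integral_def fun_eq ..
    also have "\<dots> = measure lborel S * m"
      using Sfm by (subst set_integral_const) (auto simp: fmeasurable_def)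
    also have "measure lborel S = u * (k * \<rho>) ^ DIM('b)" unfolding S_def using k0 \<rho>p by (intro volc) simp
    finally have eq: "(LINT \<delta>:\<Delta>|lborel. indicator S \<delta> * m) = u * k ^ DIM('b) * \<rho> ^ DIM('b) * m"
      by (simp add: power_mult_distrib mult.assoc)
    have "(LINT \<delta>:\<Delta>|lborel. indicator S \<delta> * m) \<le> Z"
      unfolding Z_def
    proof (rule set_integral_mono[OF intS intZ])
      fix \<delta> assume "\<delta> \<in> \<Delta>"
      show "indicator S \<delta> * m \<le> exp (h \<delta> / k)"
        using bnd by (cases "\<delta> \<in> S") auto
    qed
    then show ?thesis unfolding eq .
  qed
  have Z0: "0 < Z"
  proof -
    have "0 < u * k ^ DIM('b) * \<rho>0 ^ DIM('b) * m" using u0 k0 r0 m0 by simp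
    also have "\<dots> \<le> Z" by (rule Zlow[OF r0(2) \<open>cball c0 \<rho>0 \<subseteq> \<Delta>\<close>])
    finally show ?thesis .
  qed
  define M where "M = (ln Z - ln u - d * ln k - G / k + L * diameter \<Delta>) / d"
  have lnR2: "ln R \<le> M"
    unfolding Rdef
  proof (rule sup_ln_bound(1)[OF _ r0 Rs0])
    show "\<forall>\<rho>\<in>Rs. 0 < \<rho> \<longrightarrow> ln \<rho> \<le> M"
    proof (intro ballI impI)
      fix \<rho> assume "\<rho> \<in> Rs" "0 < \<rho>"
      then obtain c where "cball c \<rho> \<subseteq> \<Delta>" by (auto simp: Rs_def)
      then have "u * k ^ DIM('b) * \<rho> ^ DIM('b) * m \<le> Z" using Zlow \<open>0<\<rho>\<close> by simp
      then have "ln (u * k ^ DIM('b) * \<rho> ^ DIM('b) * m) \<le> ln Z" using u0 k0 m0 Z0 \<open>0<\<rho>\<close> by (subst ln_le_cancel_iff) auto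
      moreover have "ln (u * k ^ DIM('b) * \<rho> ^ DIM('b) * m) = ln u + d * ln k + d * ln \<rho> + (G / k - L * diameter \<Delta>)"
        using u0 k0 m0 \<open>0<\<rho>\<close> by (simp add: ln_mult ln_realpow d_def m_def)
      ultimately show "ln \<rho> \<le> M" unfolding M_def using d1 by (simp add: field_simps)
    qed
  qed
  have main: "G - \<epsilon> \<le> k * (ln Z - ln V)"
  proof -
    have "d * ln R \<le> ln Z - ln u - d * ln k - G / k + L * diameter \<Delta>"
      using lnR2 d1 unfolding M_def by (simp add: field_simps)
    then have "ln Z - ln V \<ge> ln r + d * ln k + G / k - L * diameter \<Delta>" using lnr by linarith
    moreover have "ln r - L * diameter \<Delta> \<ge> - C" using C_eq L0 Rpos by (simp add: algebra_simps)
    ultimately have "ln Z - ln V \<ge> G / k - C + d * ln k" by linarith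
    then have "k * (ln Z - ln V) \<ge> k * (G / k - C + d * ln k)" using k0 by (intro mult_left_mono) auto
    also have "k * (G / k - C + d * ln k) = G - k * C + d * (k * ln k)" using k0 by (simp add: field_simps)
    finally show ?thesis using kC klnk by linarith
  qed
  define \<phi> where "\<phi> = gibbs g \<Delta> k x"
  have phi: "\<phi> = (\<lambda>\<delta>. exp (h \<delta> / k) / Z)"
    unfolding \<phi>_def gibbs_def Z_def h_def ..
  have phipos: "0 < \<phi> \<delta>" for \<delta> unfolding phi using Z0 by simp
  have phine: "\<phi> \<delta> \<noteq> 0" for \<delta> using phipos[of \<delta>] by simp
  define p where "p = unif_dens \<Delta>"
  have p: "p = 1 / V" unfolding p_def unif_dens_def V_def ..
  have p0: "0 < p" unfolding p using V0 by simp
  have phicont: "continuous_on \<Delta> \<phi>" unfolding phi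
    using k0 Z0 by (auto intro!: continuous_intros hcont)
  have iphi: "set_integrable lborel \<Delta> \<phi>" by (rule cint[OF phicont])
  have ihphi: "set_integrable lborel \<Delta> (\<lambda>\<delta>. h \<delta> * \<phi> \<delta>)"
    by (rule cint) (auto intro!: continuous_intros hcont phicont)
  have iKL: "set_integrable lborel \<Delta> (\<lambda>\<delta>. \<phi> \<delta> * ln (\<phi> \<delta> / p))"
    by (rule cint) (use phine p0 in \<open>auto intro!: continuous_intros phicont\<close>)
  have iphi1: "(LINT \<delta>:\<Delta>|lborel. \<phi> \<delta>) = 1"
    unfolding phi using Z0 Z_def by simp
  have lnphi: "ln (\<phi> \<delta> / p) = h \<delta> / k - ln Z + ln V" for \<delta>
    unfolding phi p using Z0 V0 by (simp add: ln_mult ln_div)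
  define E where "E = expect \<Delta> \<phi> h"
  have E: "E = (LINT \<delta>:\<Delta>|lborel. h \<delta> * \<phi> \<delta>)" unfolding E_def expect_def ..
  define KL where "KL = KL_unif \<Delta> \<phi>"
  have KL: "KL = (LINT \<delta>:\<Delta>|lborel. \<phi> \<delta> * ln (\<phi> \<delta> / p))" unfolding KL_def KL_unif_def p_def ..
  have "KL = (LINT \<delta>:\<Delta>|lborel. h \<delta> * \<phi> \<delta> / k - (ln Z - ln V) * \<phi> \<delta>)"
    unfolding KL using Dsets by (intro set_lebesgue_integral_cong) (auto simp: lnphi algebra_simps diff_divide_distrib)
  also have "\<dots> = E / k - (ln Z - ln V)"
    using ihphi iphi iphi1 by (subst set_integral_diff(2)) (auto simp: E)
  finally have KLeq: "KL = E / k - (ln Z - ln V)" .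
  have EKL: "E - k * KL = k * (ln Z - ln V)" unfolding KLeq using k0 by (simp add: field_simps)
  have KL0: "0 \<le> KL"
  proof -
    have ip: "set_integrable lborel \<Delta> (\<lambda>\<delta>. p)" by (rule cint) simp
    have "(LINT \<delta>:\<Delta>|lborel. \<phi> \<delta> - p) \<le> KL" unfolding KL
      by (rule set_integral_mono) (use iphi ip iKL ent_pt[OF phipos p0] in auto)
    moreover have "(LINT \<delta>:\<Delta>|lborel. \<phi> \<delta> - p) = 0"
      using iphi ip iphi1 Dfm V0 by (subst set_integral_diff(2)) (auto simp: set_integral_const fmeasurable_def p V_def)
    ultimately show ?thesis by simp
  qed
  have EG: "E \<le> G"
  proof -
    have "E \<le> (LINT \<delta>:\<Delta>|lborel. G * \<phi> \<delta>)" unfolding E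
      by (rule set_integral_mono) (use ihphi iphi hle phipos in \<open>auto intro!: mult_right_mono less_imp_le\<close>)
    also have "\<dots> = G" using iphi1 by simp
    finally show ?thesis .
  qed
  have dens: "is_density \<Delta> \<phi>" unfolding is_density_def using phipos iphi iphi1 by (auto intro: less_imp_le)
  have gx: "g x = h" by (simp add: h_def)
  have c3: "E \<ge> G - \<epsilon>"
  proof -
    have "0 \<le> k * KL" using k0 KL0 by simp
    then show ?thesis using EKL main by linarith
  qed
  have c1: "expect \<Delta> \<phi> h - k * KL_unif \<Delta> \<phi> \<ge> G - \<epsilon>"
    using EKL main unfolding E_def KL_def by linarith
  have c1': "\<exists>\<phi>. is_density \<Delta> \<phi>
            \<and> set_integrable lborel \<Delta> (\<lambda>\<delta>. h \<delta> * \<phi> \<delta>)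
            \<and> set_integrable lborel \<Delta> (\<lambda>\<delta>. \<phi> \<delta> * ln (\<phi> \<delta> / unif_dens \<Delta>))
            \<and> expect \<Delta> \<phi> h - k * KL_unif \<Delta> \<phi> \<ge> G - \<epsilon>"
    using dens ihphi iKL c1 unfolding p_def by blast
  have gx: "g x = h" by (simp add: h_def)
  show ?thesis
    unfolding gx Geq k_def[symmetric] \<phi>_def[symmetric]
    using c1' EG c3 unfolding E_def by blast
qed

end
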